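(* Let $N\ge 2$ and let $p,p'$ be two paths of length $N$ with edge matrices $E$ and $E'$. Then the shapes of $p$ and $p'$ are equivalent if and only if $E'$ is obtained from $E$ by a circular shift of the columns, i.e. there is an integer $k$ such that for all $n\in\{0,\dots,N-1\}$, column $n$ of $E'$ equals column $(n+k)\bmod N$ of $E$.
   Context: A path of length $N$ is a vector $p=(p_0,\dots,p_{N-1})$ whose entries are the integers $0,\dots,N-1$ in some order; indices are cyclic, $p_N=p_0$, $s_{-1}=s_{N-1}$; $x\bmod N$ denotes the remainder in $\{0,\dots,N-1\}$. Nodes $0,\dots,N-1$ are placed at equally spaced points clockwise around a circle; the shape of $p$ is the set of chords joining node $p_n$ to node $p_{n+1}$, $n=0,\dots,N-1$. Two shapes are equivalent if some rotation of the plane about the center of the circle maps one onto the other. The path differences are $d_n=p_{n+1}-p_n$, and the steps are $s_n=d_n$ if $|d_n|<N/2$; $s_n=N/2$ if $|d_n|=N/2$; $s_n=d_n-N$ if $d_n>N/2$; $s_n=d_n+N$ if $d_n<-N/2$. The edge matrix $E=(e_{in})\in\mathbb{Z}^{2\times N}$ of $p$: for node $n$ let $k$ be the index with $p_k=n$; take $s_k$ and $-s_{k-1}$, replace each by $0$ if its absolute value equals $N/2$, and let $e_{1n}\le e_{2n}$ be these two integers sorted in nondecreasing order. *)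

theory Defs
  imports "HOL-Analysis.Analysis"
begin

definition is_path :: "nat \<Rightarrow> (nat \<Rightarrow> nat) \<Rightarrow> bool" where
  "is_path N p \<longleftrightarrow> bij_betw p {..<N} {..<N}"

definition node :: "nat \<Rightarrow> nat \<Rightarrow> complex" where
  "node N j = cis (- 2 * pi * real j / real N)"

definition chord :: "nat \<Rightarrow> nat \<Rightarrow> nat \<Rightarrow> complex set" where
  "chord N a b = closed_segment (node N a) (node N b)"

definition shape :: "nat \<Rightarrow> (nat \<Rightarrow> nat) \<Rightarrow> complex set set" where
  "shape N p = (\<lambda>n. chord N (p n) (p (Suc n mod N))) ` {..<N}"

definition shapes_equiv :: "complex set set \<Rightarrow> complex set set \<Rightarrow> bool" where
  "shapes_equiv S T \<longleftrightarrow> (\<exists>\<theta>::real. (\<lambda>C. (\<lambda>z. cis \<theta> * z) ` C) ` S = T)"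

definition step :: "nat \<Rightarrow> (nat \<Rightarrow> nat) \<Rightarrow> nat \<Rightarrow> int" where
  "step N p n = (let d = int (p (Suc n mod N)) - int (p n) in
     if 2 * \<bar>d\<bar> < int N then d
     else if 2 * \<bar>d\<bar> = int N then int N div 2
     else if d > 0 then d - int N else d + int N)"

definition zero_half :: "nat \<Rightarrow> int \<Rightarrow> int" where
  "zero_half N x = (if 2 * \<bar>x\<bar> = int N then 0 else x)"

text \<open>Column n of the edge matrix, as the pair (e_1n, e_2n) with e_1n \<le> e_2n.\<close>
definition edge_col :: "nat \<Rightarrow> (nat \<Rightarrow> nat) \<Rightarrow> nat \<Rightarrow> int \<times> int" where
  "edge_col N p n = (let k = the_inv_into {..<N} p n;
       a = zero_half N (step N p k);
       b = zero_half N (- step N p ((k + N - 1) mod N))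
     in (min a b, max a b))"

end

theory Submission
  imports Defs
begin

definition nrm :: "nat \<Rightarrow> int \<Rightarrow> int" where
  "nrm N d = (if 2 * \<bar>d\<bar> < int N then d
     else if 2 * \<bar>d\<bar> = int N then int N div 2
     else if d > 0 then d - int N else d + int N)"
definition gg :: "nat \<Rightarrow> nat \<Rightarrow> nat \<Rightarrow> int" where
  "gg N a b = zero_half N (nrm N (int b - int a))"
definition off :: "nat \<Rightarrow> int \<Rightarrow> int" where
  "off N v = (if v = 0 then int N div 2 else v)"

lemma zh_neg: "zero_half N (- nrm N d) = zero_half N (nrm N (- d))"
proof (cases "2 * \<bar>d\<bar> < int N")
  case True then show ?thesis by (simp add: nrm_def zero_half_def)
next
  case F: False
  show ?thesis
  proof (cases "2 * \<bar>d\<bar> = int N")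
    case True
    then have h: "int N div 2 = \<bar>d\<bar>" by (metis nonzero_mult_div_cancel_left zero_neq_numeral)
    then have "2 * \<bar>int N div 2\<bar> = int N" using True by simp
    then show ?thesis using True by (simp add: nrm_def zero_half_def)
  next
    case False
    have "- nrm N d = nrm N (-d)"
    proof (cases "d > 0")
      case True
      then show ?thesis using F False by (simp add: nrm_def)
    next
      case False2: False
      then have "d < 0" using F False by (cases "d = 0") auto
      then show ?thesis using F False by (simp add: nrm_def)
    qed
    then show ?thesis by simp
  qed
qed

lemma off_cong: assumes "- int N < d" "d < int N" "d \<noteq> 0"
  shows "(off N (zero_half N (nrm N d)) - d) mod int N = 0"
proof (cases "2 * \<bar>d\<bar> < int N")
  case True then show ?thesis using assms by (simp add: nrm_def zero_half_def off_def)
next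
  case F: False
  show ?thesis
  proof (cases "2 * \<bar>d\<bar> = int N")
    case True
    then have h: "int N div 2 = \<bar>d\<bar>" by (metis nonzero_mult_div_cancel_left zero_neq_numeral)
    then have "2 * \<bar>int N div 2\<bar> = int N" using True by simp
    moreover have "int N div 2 - d = 0 \<or> int N div 2 - d = int N" using True h by (auto simp: abs_if)
    ultimately show ?thesis using True by (auto simp: nrm_def zero_half_def off_def)
  next
    case False
    show ?thesis
    proof (cases "d > 0")
      case True
      then have "nrm N d = d - int N" using F False by (simp add: nrm_def)
      moreover have "zero_half N (d - int N) = d - int N" using True False assms
        by (simp add: zero_half_def)
      moreover have "d - int N \<noteq> 0" using assms by simp
      ultimately show ?thesis by (simp add: off_def)
    next
      case False2: False
      then have d0: "d < 0" using assms by simp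
      then have "nrm N d = d + int N" using F False by (simp add: nrm_def)
      moreover have "zero_half N (d + int N) = d + int N" using d0 False assms
        by (simp add: zero_half_def)
      moreover have "d + int N \<noteq> 0" using assms by simp
      ultimately show ?thesis by (simp add: off_def)
    qed
  qed
qed

lemma gg_inj: assumes "x < N" "a < N" "b < N" "a \<noteq> x" "b \<noteq> x" "gg N x a = gg N x b"
  shows "a = b"
proof -
  have 1: "(off N (gg N x a) - (int a - int x)) mod int N = 0"
    unfolding gg_def by (rule off_cong) (use assms in auto)
  have 2: "(off N (gg N x b) - (int b - int x)) mod int N = 0"
    unfolding gg_def by (rule off_cong) (use assms in auto)
  have e: "(off N (gg N x b) - (int b - int x)) - (off N (gg N x a) - (int a - int x)) = int a - int b"
    using assms(6) by simp
  have dv: "int N dvd (int a - int b)"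
    using dvd_diff[OF 2[unfolded mod_eq_0_iff_dvd] 1[unfolded mod_eq_0_iff_dvd]] unfolding e .
  show ?thesis
  proof (rule ccontr)
    assume "a \<noteq> b"
    then have "int a - int b \<noteq> 0" by simp
    from dvd_imp_le_int[OF this dv] have "\<bar>int N\<bar> \<le> \<bar>int a - int b\<bar>" .
    then show False using assms(2,3) by linarith
  qed
qed
definition sh :: "nat \<Rightarrow> int \<Rightarrow> nat \<Rightarrow> nat" where
  "sh N k j = nat ((int j + k) mod int N)"

lemma sh_lt: "N > 0 \<Longrightarrow> sh N k j < N"
  unfolding sh_def by (simp add: nat_less_iff)

lemma sh_inv: assumes "N > 0" "j < N" shows "sh N (- k) (sh N k j) = j"
proof -
  have 1: "int (nat ((int j + k) mod int N)) = (int j + k) mod int N" using assms by simp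
  have 2: "((int j + k) mod int N + - k) mod int N = (int j + k + - k) mod int N"
    by (rule mod_add_left_eq)
  show ?thesis unfolding sh_def 1 2 using assms by simp
qed

lemma sh_inj: "N > 0 \<Longrightarrow> a < N \<Longrightarrow> b < N \<Longrightarrow> sh N k a = sh N k b \<Longrightarrow> a = b"
  by (metis sh_inv)

lemma nrm_per: assumes "- int N < d" "d < 0" shows "nrm N (d + int N) = nrm N d"
proof -
  have a1: "\<bar>d\<bar> = - d" "\<bar>d + int N\<bar> = d + int N" using assms by auto
  consider "2 * (- d) < int N" | "2 * (- d) = int N" | "2 * (- d) > int N" by linarith
  then show ?thesis
  proof cases
    case 1
    then have "\<not> 2 * (d + int N) < int N" "2 * (d + int N) \<noteq> int N" "d + int N > 0" using assms by auto
    then show ?thesis using 1 unfolding nrm_def a1 by simp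
  next
    case 2
    then have "2 * (d + int N) = int N" by simp
    then show ?thesis using 2 unfolding nrm_def a1 by simp
  next
    case 3
    then have "2 * (d + int N) < int N" "\<not> 2 * (- d) < int N" "2 * (- d) \<noteq> int N" "\<not> d > 0" using assms by auto
    then show ?thesis using 3 unfolding nrm_def a1 by simp
  qed
qed

lemma gg_sh: assumes "a < N" "b < N" shows "gg N (sh N k a) (sh N k b) = gg N a b"
proof -
  have N: "N > 0" using assms by auto
  define A where "A = (int a + k) mod int N"
  define B where "B = (int b + k) mod int N"
  have A: "0 \<le> A" "A < int N" using N by (auto simp: A_def)
  have B: "0 \<le> B" "B < int N" using N by (auto simp: B_def)
  have "(B - A) mod int N = (int b - int a) mod int N"
    unfolding A_def B_def by (metis add_diff_cancel_right mod_diff_eq)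
  then obtain q where q: "B - A = int b - int a + q * int N"
    by (metis mod_eqE mult.commute)
  have "q = -1 \<or> q = 0 \<or> q = 1"
  proof -
    have "q * int N < 2 * int N" "q * int N > -2 * int N" using q A B assms by linarith+
    then have h1: "q * int N < 2 * int N" and h2: "(-2) * int N < q * int N" by simp_all
    have "q < 2" using mult_right_less_imp_less[OF h1] by simp
    moreover have "-2 < q" using mult_right_less_imp_less[OF h2] by simp
    ultimately show ?thesis by linarith
  qed
  then have "nrm N (B - A) = nrm N (int b - int a)"
  proof (elim disjE)
    assume "q = -1"
    then have "B - A = (int b - int a) - int N" using q by simp
    moreover have "nrm N ((int b - int a) - int N + int N) = nrm N ((int b - int a) - int N)"
      by (rule nrm_per) (use \<open>B - A = (int b - int a) - int N\<close> A B assms in linarith)+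
    ultimately show ?thesis by simp
  next
    assume "q = 0" then show ?thesis using q by simp
  next
    assume "q = 1"
    then have "B - A = (int b - int a) + int N" using q by simp
    moreover have "nrm N ((int b - int a) + int N) = nrm N (int b - int a)"
      by (rule nrm_per) (use \<open>B - A = (int b - int a) + int N\<close> A B assms in linarith)+
    ultimately show ?thesis by simp
  qed
  then show ?thesis unfolding gg_def sh_def A_def[symmetric] B_def[symmetric] using A B by simp
qed

definition pinv :: "nat \<Rightarrow> (nat \<Rightarrow> nat) \<Rightarrow> nat \<Rightarrow> nat" where
  "pinv N p x = the_inv_into {..<N} p x"
definition sc :: "nat \<Rightarrow> (nat \<Rightarrow> nat) \<Rightarrow> nat \<Rightarrow> nat" where
  "sc N p x = p (Suc (pinv N p x) mod N)"
definition pr :: "nat \<Rightarrow> (nat \<Rightarrow> nat) \<Rightarrow> nat \<Rightarrow> nat" where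
  "pr N p x = p ((pinv N p x + N - 1) mod N)"
definition Ed :: "nat \<Rightarrow> (nat \<Rightarrow> nat) \<Rightarrow> nat set set" where
  "Ed N p = (\<lambda>j. {p j, p (Suc j mod N)}) ` {..<N}"

lemma mod_pred_suc: "N > 0 \<Longrightarrow> k < N \<Longrightarrow> Suc ((k + N - 1) mod N) mod N = k"
proof (cases k)
  case 0
  assume "N > 0" then show ?thesis using 0 by (cases N) auto
next
  case (Suc j)
  assume "N > 0" "k < N"
  then have "k + N - 1 = j + N" using Suc by simp
  then show ?thesis using Suc \<open>k < N\<close> by simp
qed

lemma mod_suc_pred: "N > 0 \<Longrightarrow> j < N \<Longrightarrow> (Suc j mod N + N - 1) mod N = j"
proof (cases "Suc j = N")
  case True then show ?thesis by simp
next
  case False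
  assume "N > 0" "j < N"
  then have "Suc j < N" using False by simp
  then show ?thesis by simp
qed

lemma suc_mod_ne: assumes "2 \<le> N" "k < N" shows "Suc k mod N \<noteq> k"
proof (cases "Suc k < N")
  case True then show ?thesis by simp
next
  case False
  then have "Suc k = N" using assms by simp
  then show ?thesis using assms by auto
qed

context
  fixes N p assumes N2: "N \<ge> 2" and P: "is_path N p"
begin

lemma bij: "bij_betw p {..<N} {..<N}" using P unfolding is_path_def .
lemma injp: "inj_on p {..<N}" using bij by (simp add: bij_betw_def)
lemma p_lt: "j < N \<Longrightarrow> p j < N" using bij by (auto simp: bij_betw_def)
lemma p_inj: "i < N \<Longrightarrow> j < N \<Longrightarrow> p i = p j \<Longrightarrow> i = j" using injp by (auto simp: inj_on_def)

lemma inv_lt: "x < N \<Longrightarrow> pinv N p x < N"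
proof -
  assume x: "x < N"
  have "x \<in> p ` {..<N}" using bij x by (simp add: bij_betw_def)
  from the_inv_into_into[OF injp this order_refl] show ?thesis by (simp add: pinv_def)
qed
lemma p_inv: "x < N \<Longrightarrow> p (pinv N p x) = x"
  unfolding pinv_def using bij by (simp add: f_the_inv_into_f_bij_betw)
lemma inv_p: "j < N \<Longrightarrow> pinv N p (p j) = j"
  unfolding pinv_def using injp by (simp add: the_inv_into_f_f)

lemma sc_lt: "x < N \<Longrightarrow> sc N p x < N"
  unfolding sc_def using N2 by (simp add: p_lt)
lemma pr_lt: "x < N \<Longrightarrow> pr N p x < N"
  unfolding pr_def using N2 by (simp add: p_lt)
lemma sc_ne: "x < N \<Longrightarrow> sc N p x \<noteq> x"
proof
  assume x: "x < N" "sc N p x = x"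
  then have "p (Suc (pinv N p x) mod N) = p (pinv N p x)" by (simp add: sc_def p_inv)
  then have "Suc (pinv N p x) mod N = pinv N p x" using p_inj inv_lt x N2 by simp
  then show False using suc_mod_ne[OF N2 inv_lt[OF x(1)]] by simp
qed
lemma pr_ne: "x < N \<Longrightarrow> pr N p x \<noteq> x"
proof
  assume x: "x < N" "pr N p x = x"
  define k where "k = pinv N p x"
  have k: "k < N" using inv_lt x by (simp add: k_def)
  have "p ((k + N - 1) mod N) = p k" using x by (simp add: pr_def p_inv k_def)
  then have "(k + N - 1) mod N = k" using p_inj k N2 by simp
  then have "Suc ((k + N - 1) mod N) mod N = Suc k mod N" by simp
  then have "k = Suc k mod N" using mod_pred_suc[of N k] k N2 by simp
  then show False using suc_mod_ne[OF N2 k] by simp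
qed

lemma col: assumes x: "x < N"
  shows "edge_col N p x = (min (gg N x (sc N p x)) (gg N x (pr N p x)), max (gg N x (sc N p x)) (gg N x (pr N p x)))"
proof -
  define k where "k = pinv N p x"
  have k: "k < N" "p k = x" using inv_lt p_inv x by (auto simp: k_def)
  have a: "zero_half N (step N p k) = gg N x (sc N p x)"
    unfolding gg_def sc_def k_def[symmetric] using k by (simp add: step_def nrm_def Let_def)
  have s: "Suc ((k + N - 1) mod N) mod N = k" using mod_pred_suc k N2 by simp
  have "zero_half N (- step N p ((k + N - 1) mod N)) = zero_half N (- nrm N (int x - int (pr N p x)))"
    unfolding pr_def k_def[symmetric] using k s by (simp add: step_def nrm_def Let_def)
  also have "\<dots> = gg N x (pr N p x)" unfolding zh_neg gg_def by simp
  finally have b: "zero_half N (- step N p ((k + N - 1) mod N)) = gg N x (pr N p x)" .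
  show ?thesis unfolding edge_col_def Let_def pinv_def[symmetric] k_def[symmetric] a b ..
qed

lemma Ed_I: "j < N \<Longrightarrow> {p j, p (Suc j mod N)} \<in> Ed N p"
  unfolding Ed_def by (rule imageI) simp

lemma nbr: assumes x: "x < N" shows "{x, m} \<in> Ed N p \<longleftrightarrow> m = sc N p x \<or> m = pr N p x"
proof
  assume "{x, m} \<in> Ed N p"
  then obtain j where j: "j < N" "{x, m} = {p j, p (Suc j mod N)}" unfolding Ed_def by blast
  have sj: "Suc j mod N < N" using N2 by simp
  from j(2) have "(x = p j \<and> m = p (Suc j mod N)) \<or> (x = p (Suc j mod N) \<and> m = p j)"
    by (simp add: doubleton_eq_iff)
  then show "m = sc N p x \<or> m = pr N p x"
  proof
    assume h: "x = p j \<and> m = p (Suc j mod N)"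
    then have "pinv N p x = j" using inv_p j by simp
    then show ?thesis using h by (simp add: sc_def)
  next
    assume h: "x = p (Suc j mod N) \<and> m = p j"
    then have "pinv N p x = Suc j mod N" using inv_p sj by simp
    then have "(pinv N p x + N - 1) mod N = j" using mod_suc_pred[of N j] j N2 by simp
    then show ?thesis using h by (simp add: pr_def)
  qed
next
  assume "m = sc N p x \<or> m = pr N p x"
  then show "{x, m} \<in> Ed N p"
  proof
    assume m: "m = sc N p x"
    have "{p (pinv N p x), p (Suc (pinv N p x) mod N)} \<in> Ed N p"
      using Ed_I[OF inv_lt[OF x]] .
    then show ?thesis using m p_inv x by (simp add: sc_def)
  next
    assume m: "m = pr N p x"
    define j where "j = (pinv N p x + N - 1) mod N"
    have j: "j < N" using N2 by (simp add: j_def)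
    have sj: "Suc j mod N = pinv N p x" unfolding j_def using mod_pred_suc inv_lt x N2 by simp
    have "{p j, p (Suc j mod N)} \<in> Ed N p" using Ed_I[OF j] .
    then have e: "{p j, x} \<in> Ed N p" using p_inv x sj by simp
    have "{x, m} = {p j, x}" using m by (auto simp: pr_def j_def)
    then show ?thesis using e by simp
  qed
qed

lemma nbr_set: assumes x: "x < N" shows "{m. {x, m} \<in> Ed N p} = {sc N p x, pr N p x}"
proof (rule set_eqI)
  fix m show "m \<in> {m. {x, m} \<in> Ed N p} \<longleftrightarrow> m \<in> {sc N p x, pr N p x}"
    using nbr[OF x, of m] by simp
qed

lemma Ed_form: "e \<in> Ed N p \<Longrightarrow> \<exists>a b. e = {a, b} \<and> a < N \<and> b < N"
proof -
  assume "e \<in> Ed N p"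
  then obtain j where j: "j < N" "e = {p j, p (Suc j mod N)}" unfolding Ed_def by auto
  have "p j < N" "p (Suc j mod N) < N" using p_lt j N2 by auto
  then show ?thesis using j by blast
qed

lemma Ed_sub: "e \<in> Ed N p \<Longrightarrow> e \<subseteq> {..<N}"
proof -
  assume "e \<in> Ed N p"
  from Ed_form[OF this] obtain a b where "e = {a, b}" "a < N" "b < N" by blast
  then show ?thesis by auto
qed

lemma p0_in: "{p 0, p 1} \<in> Ed N p"
proof -
  have "{p 0, p (Suc 0 mod N)} \<in> Ed N p" using Ed_I[of 0] N2 by simp
  moreover have "Suc 0 mod N = 1" using N2 by simp
  ultimately show ?thesis by simp
qed

end



lemma seg_sphere:
  fixes a b z :: complex
  assumes a: "norm a = 1" and b: "norm b = 1" and z: "z \<in> closed_segment a b" and nz: "norm z = 1"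
  shows "z = a \<or> z = b"
proof (rule ccontr)
  assume ne: "\<not> (z = a \<or> z = b)"
  from z obtain u where u: "0 \<le> u" "u \<le> 1" "z = (1 - u) *\<^sub>R a + u *\<^sub>R b" by (auto simp: in_segment)
  have u0: "u \<noteq> 0" using ne u by auto
  have u1: "u \<noteq> 1" using ne u by auto
  have ab: "a \<noteq> b" using ne u by (auto simp: scaleR_left_distrib[symmetric])
  have aa: "a \<bullet> a = 1" using a power2_norm_eq_inner[of a] by simp
  have bb: "b \<bullet> b = 1" using b power2_norm_eq_inner[of b] by simp
  have "0 < norm (a - b) ^ 2" using ab by simp
  also have "norm (a - b) ^ 2 = a \<bullet> a - 2 * (a \<bullet> b) + b \<bullet> b"
    by (simp add: power2_norm_eq_inner inner_diff_left inner_diff_right inner_commute)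
  finally have ab1: "a \<bullet> b < 1" using aa bb by simp
  have "norm z ^ 2 = (1 - u)^2 * (a \<bullet> a) + u^2 * (b \<bullet> b) + 2 * ((1 - u) * u) * (a \<bullet> b)"
    unfolding u(3) power2_norm_eq_inner
    by (simp add: inner_add_left inner_add_right inner_commute algebra_simps power2_eq_square)
  also have "\<dots> = 1 - 2 * ((1 - u) * u) * (1 - a \<bullet> b)" using aa bb
    by (simp add: algebra_simps power2_eq_square)
  also have "\<dots> < 1"
  proof -
    have "0 < (1 - u) * u" using u u0 u1 by simp
    moreover have "0 < 1 - a \<bullet> b" using ab1 by simp
    ultimately show ?thesis by simp
  qed
  finally show False using nz by simp
qed

lemma hull_sphere:
  fixes a b :: complex
  assumes "norm a = 1" "norm b = 1"
  shows "convex hull {a, b} \<inter> sphere 0 1 = {a, b}"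
proof
  show "convex hull {a, b} \<inter> sphere 0 1 \<subseteq> {a, b}"
  proof
    fix z assume z: "z \<in> convex hull {a, b} \<inter> sphere 0 1"
    then have "z \<in> closed_segment a b" "norm z = 1" by (auto simp: segment_convex_hull)
    from seg_sphere[OF assms this] show "z \<in> {a, b}" by simp
  qed
  show "{a, b} \<subseteq> convex hull {a, b} \<inter> sphere 0 1"
    using assms by (auto simp: hull_inc)
qed

lemma norm_node: "norm (node N j) = 1" by (simp add: node_def)

lemma node_sh: assumes N: "N > 0"
  shows "node N (sh N r j) = cis (- 2 * pi * real_of_int r / real N) * node N j"
proof -
  define q where "q = (int j + r) div int N"
  have m: "(int j + r) mod int N = int j + r - int N * q" unfolding q_def
    by (simp add: minus_div_mult_eq_mod [symmetric] algebra_simps)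
  have nn: "0 \<le> (int j + r) mod int N" using N by simp
  have "real (sh N r j) = real_of_int ((int j + r) mod int N)"
    unfolding sh_def using nn by simp
  also have "\<dots> = real j + real_of_int r - real N * real_of_int q" unfolding m by simp
  finally have s: "real (sh N r j) = real j + real_of_int r - real N * real_of_int q" .
  define A where "A = - 2 * pi * real_of_int r / real N + - 2 * pi * real j / real N"
  have e: "- 2 * pi * real (sh N r j) / real N = A + 2 * pi * real_of_int q"
    unfolding s A_def using N by (simp add: field_simps)
  have "node N (sh N r j) = cis (A + 2 * pi * real_of_int q)" unfolding node_def e ..
  also have "\<dots> = cis A * cis (2 * pi * real_of_int q)" by (simp only: cis_mult)
  also have "cis (2 * pi * real_of_int q) = 1" by (rule cis_multiple_2pi) simp
  also have "cis A = cis (- 2 * pi * real_of_int r / real N) * node N j"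
    unfolding A_def node_def by (simp only: cis_mult)
  finally show ?thesis by simp
qed

lemma node_inj: assumes "a < N" "b < N" "node N a = node N b" shows "a = b"
proof -
  have N: "N > 0" using assms by simp
  define x where "x = - 2 * pi * (real a - real b) / real N"
  have xe: "x = - 2 * pi * real a / real N - - 2 * pi * real b / real N"
    unfolding x_def using N by (simp add: field_simps)
  have "cis x = node N a / node N b" unfolding node_def cis_divide xe ..
  also have "\<dots> = 1" using assms(3) by (simp add: node_def)
  finally have "exp (\<i> * complex_of_real x) = 1" by (simp add: cis_conv_exp)
  then obtain n :: int where n: "x = of_int (2 * n) * pi" by (auto simp: exp_eq_1)
  then have "pi * (2 * (real b - real a)) = pi * (2 * (real N * of_int n))" unfolding x_def using N
    by (simp add: field_simps)
  then have "2 * (real b - real a) = 2 * (real N * of_int n)" using pi_gt_zero by simp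
  then have "- (real a - real b) = real N * of_int n" by simp
  then have e: "int b - int a = int N * n"
    by (metis of_int_eq_iff of_int_mult of_int_of_nat_eq of_int_diff minus_diff_eq)
  show ?thesis
  proof (rule ccontr)
    assume "a \<noteq> b"
    then have "n \<noteq> 0" using e by auto
    then have "1 \<le> \<bar>n\<bar>" by simp
    then have "int N * 1 \<le> int N * \<bar>n\<bar>" by (rule mult_left_mono) simp
    then have "\<bar>int N * n\<bar> \<ge> int N" by (simp add: abs_mult)
    then show False using e assms by linarith
  qed
qed

definition hullN :: "nat \<Rightarrow> nat set \<Rightarrow> complex set" where
  "hullN N e = convex hull (node N ` e)"

lemma hullN_sphere: "hullN N {a, b} \<inter> sphere 0 1 = node N ` {a, b}"
  unfolding hullN_def using hull_sphere[OF norm_node norm_node] by simp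

definition PF :: "nat \<Rightarrow> nat set set" where
  "PF N = {e. \<exists>a b. e = {a, b} \<and> a < N \<and> b < N}"

lemma hullN_inj: "inj_on (hullN N) (PF N)"
proof (rule inj_onI)
  fix e1 e2 assume e1: "e1 \<in> PF N" and e2: "e2 \<in> PF N" and h: "hullN N e1 = hullN N e2"
  from e1 obtain a b where ab: "e1 = {a, b}" "a < N" "b < N" by (auto simp: PF_def)
  from e2 obtain c d where cd: "e2 = {c, d}" "c < N" "d < N" by (auto simp: PF_def)
  have "node N ` e1 = node N ` e2" using hullN_sphere[of N a b] hullN_sphere[of N c d] h ab cd by simp
  moreover have "inj_on (node N) {..<N}" by (auto intro!: inj_onI node_inj)
  moreover have "e1 \<subseteq> {..<N}" "e2 \<subseteq> {..<N}" using ab cd by auto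
  ultimately show "e1 = e2" using inj_on_image_eq_iff by metis
qed

lemma rot_hull: "(\<lambda>z. c * z) ` (convex hull (S :: complex set)) = convex hull ((\<lambda>z. c * z) ` S)"
  by (rule convex_hull_linear_image) (rule bounded_linear.linear[OF bounded_linear_mult_right])

lemma rot_hullN: assumes "N > 0"
  shows "(\<lambda>z. cis (- 2 * pi * real_of_int r / real N) * z) ` hullN N e = hullN N (sh N r ` e)"
  unfolding hullN_def rot_hull image_image using node_sh[OF assms] by simp

lemma shape_eq: "shape N p = hullN N ` Ed N p"
  unfolding shape_def Ed_def image_image hullN_def chord_def segment_convex_hull by simp



lemma sort_eq: "((min a b, max a b) = (min c d, max c d)) \<longleftrightarrow> ({a, b} = {c, d::int})"
  by (auto simp: min_def max_def doubleton_eq_iff split: if_splits)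

lemma gg_pair: assumes "x < N" "u < N" "v < N" "s < N" "q < N" "u \<noteq> x" "v \<noteq> x" "s \<noteq> x" "q \<noteq> x"
  shows "({gg N x u, gg N x v} = {gg N x s, gg N x q}) \<longleftrightarrow> ({u, v} = {s, q})"
proof
  assume "{gg N x u, gg N x v} = {gg N x s, gg N x q}"
  then have "(gg N x u = gg N x s \<and> gg N x v = gg N x q) \<or> (gg N x u = gg N x q \<and> gg N x v = gg N x s)"
    by (simp add: doubleton_eq_iff)
  then show "{u, v} = {s, q}"
  proof
    assume h: "gg N x u = gg N x s \<and> gg N x v = gg N x q"
    then have "u = s" "v = q" using gg_inj assms by blast+
    then show ?thesis by simp
  next
    assume h: "gg N x u = gg N x q \<and> gg N x v = gg N x s"
    then have "u = q" "v = s" using gg_inj assms by blast+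
    then show ?thesis by auto
  qed
next
  assume "{u, v} = {s, q}"
  then have "(u = s \<and> v = q) \<or> (u = q \<and> v = s)" by (simp add: doubleton_eq_iff)
  then show "{gg N x u, gg N x v} = {gg N x s, gg N x q}" by auto
qed

context
  fixes N p p' assumes N2: "N \<ge> 2" and P: "is_path N p" and P': "is_path N p'"
begin

lemma col_NB: assumes n: "n < N"
  shows "edge_col N p' n = edge_col N p (sh N k n) \<longleftrightarrow>
    {sc N p (sh N k n), pr N p (sh N k n)} = sh N k ` {sc N p' n, pr N p' n}"
proof -
  have N0: "N > 0" using N2 by simp
  define x where "x = sh N k n"
  define s' where "s' = sc N p' n"
  define q' where "q' = pr N p' n"
  have x: "x < N" using sh_lt N0 by (simp add: x_def)
  have s': "s' < N" "s' \<noteq> n" using sc_lt[OF N2 P' n] sc_ne[OF N2 P' n] by (auto simp: s'_def)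
  have q': "q' < N" "q' \<noteq> n" using pr_lt[OF N2 P' n] pr_ne[OF N2 P' n] by (auto simp: q'_def)
  have S: "sh N k s' < N" "sh N k s' \<noteq> x" using sh_lt[OF N0] sh_inj[OF N0 s'(1) n] s' by (auto simp: x_def)
  have Q: "sh N k q' < N" "sh N k q' \<noteq> x" using sh_lt[OF N0] sh_inj[OF N0 q'(1) n] q' by (auto simp: x_def)
  have c1: "edge_col N p' n = (min (gg N x (sh N k s')) (gg N x (sh N k q')), max (gg N x (sh N k s')) (gg N x (sh N k q')))"
    using gg_sh[OF n s'(1), of k] gg_sh[OF n q'(1), of k] by (simp add: col[OF N2 P' n] x_def s'_def q'_def)
  have c2: "edge_col N p x = (min (gg N x (sc N p x)) (gg N x (pr N p x)), max (gg N x (sc N p x)) (gg N x (pr N p x)))"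
    by (rule col[OF N2 P x])
  have "edge_col N p' n = edge_col N p x \<longleftrightarrow>
      {gg N x (sh N k s'), gg N x (sh N k q')} = {gg N x (sc N p x), gg N x (pr N p x)}"
    unfolding c1 c2 sort_eq ..
  also have "\<dots> \<longleftrightarrow> {sh N k s', sh N k q'} = {sc N p x, pr N p x}"
    by (rule gg_pair) (use x S Q sc_lt[OF N2 P x] pr_lt[OF N2 P x] sc_ne[OF N2 P x] pr_ne[OF N2 P x] in auto)
  finally show ?thesis unfolding x_def s'_def q'_def by auto
qed

lemma Ed_sc: assumes "e \<in> Ed N p" shows "\<exists>x<N. e = {x, sc N p x}"
proof -
  from assms obtain j where j: "j < N" "e = {p j, p (Suc j mod N)}" unfolding Ed_def by blast
  have "sc N p (p j) = p (Suc j mod N)" unfolding sc_def using inv_p[OF N2 P j(1)] by simp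
  then show ?thesis using j p_lt[OF N2 P j(1)] by auto
qed

lemma Ed_sc': assumes "e \<in> Ed N p'" shows "\<exists>x<N. e = {x, sc N p' x}"
proof -
  from assms obtain j where j: "j < N" "e = {p' j, p' (Suc j mod N)}" unfolding Ed_def by blast
  have "sc N p' (p' j) = p' (Suc j mod N)" unfolding sc_def using inv_p[OF N2 P' j(1)] by simp
  then show ?thesis using j p_lt[OF N2 P' j(1)] by auto
qed

lemma NB_Ed:
  "(\<forall>n<N. {sc N p (sh N k n), pr N p (sh N k n)} = sh N k ` {sc N p' n, pr N p' n}) \<longleftrightarrow>
   (\<lambda>e. sh N k ` e) ` Ed N p' = Ed N p"
proof
  have N0: "N > 0" using N2 by simp
  assume NB: "\<forall>n<N. {sc N p (sh N k n), pr N p (sh N k n)} = sh N k ` {sc N p' n, pr N p' n}"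
  show "(\<lambda>e. sh N k ` e) ` Ed N p' = Ed N p"
  proof
    show "(\<lambda>e. sh N k ` e) ` Ed N p' \<subseteq> Ed N p"
    proof
      fix f assume "f \<in> (\<lambda>e. sh N k ` e) ` Ed N p'"
      then obtain e where e: "e \<in> Ed N p'" "f = sh N k ` e" by blast
      from Ed_sc'[OF e(1)] obtain n where n: "n < N" "e = {n, sc N p' n}" by blast
      have "sh N k (sc N p' n) \<in> {sc N p (sh N k n), pr N p (sh N k n)}" using NB n(1) by auto
      then have "{sh N k n, sh N k (sc N p' n)} \<in> Ed N p"
        using nbr[OF N2 P sh_lt[OF N0]] by blast
      then show "f \<in> Ed N p" using e n by simp
    qed
  next
    show "Ed N p \<subseteq> (\<lambda>e. sh N k ` e) ` Ed N p'"
    proof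
      fix f assume f: "f \<in> Ed N p"
      from Ed_sc[OF f] obtain x where x: "x < N" "f = {x, sc N p x}" by blast
      define n where "n = sh N (- k) x"
      have n: "n < N" using sh_lt[OF N0] by (simp add: n_def)
      have xn: "sh N k n = x" using sh_inv[OF N0 x(1), of "- k"] by (simp add: n_def)
      have "sc N p x \<in> sh N k ` {sc N p' n, pr N p' n}" using NB n xn by blast
      then obtain m where m: "m \<in> {sc N p' n, pr N p' n}" "sc N p x = sh N k m" by blast
      have "{n, m} \<in> Ed N p'" using nbr[OF N2 P' n] m(1) by blast
      moreover have "sh N k ` {n, m} = f" using x xn m by simp
      ultimately show "f \<in> (\<lambda>e. sh N k ` e) ` Ed N p'" by blast
    qed
  qed
next
  have N0: "N > 0" using N2 by simp
  assume EE: "(\<lambda>e. sh N k ` e) ` Ed N p' = Ed N p"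
  show "\<forall>n<N. {sc N p (sh N k n), pr N p (sh N k n)} = sh N k ` {sc N p' n, pr N p' n}"
  proof (intro allI impI)
    fix n assume n: "n < N"
    define x where "x = sh N k n"
    have x: "x < N" using sh_lt[OF N0] by (simp add: x_def)
    have "{m. {x, m} \<in> Ed N p} = sh N k ` {m. {n, m} \<in> Ed N p'}"
    proof
      show "{m. {x, m} \<in> Ed N p} \<subseteq> sh N k ` {m. {n, m} \<in> Ed N p'}"
      proof
        fix m assume "m \<in> {m. {x, m} \<in> Ed N p}"
        then have "{x, m} \<in> (\<lambda>e. sh N k ` e) ` Ed N p'" using EE by simp
        then obtain e where e: "e \<in> Ed N p'" "{x, m} = sh N k ` e" by blast
        from Ed_form[OF N2 P' e(1)] obtain a b where ab: "e = {a, b}" "a < N" "b < N" by blast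
        have "{x, m} = {sh N k a, sh N k b}" using e ab by simp
        then have "(x = sh N k a \<and> m = sh N k b) \<or> (x = sh N k b \<and> m = sh N k a)"
          by (simp add: doubleton_eq_iff)
        then show "m \<in> sh N k ` {m. {n, m} \<in> Ed N p'}"
        proof
          assume h: "x = sh N k a \<and> m = sh N k b"
          then have "n = a" using sh_inj[OF N0 n ab(2), of k] by (simp add: x_def)
          then have "{n, b} \<in> Ed N p'" using e ab by simp
          then show ?thesis using h by blast
        next
          assume h: "x = sh N k b \<and> m = sh N k a"
          then have "n = b" using sh_inj[OF N0 n ab(3), of k] by (simp add: x_def)
          then have "{n, a} \<in> Ed N p'" using e ab by (simp add: insert_commute)
          then show ?thesis using h by blast
        qed
      qed
    next
      show "sh N k ` {m. {n, m} \<in> Ed N p'} \<subseteq> {m. {x, m} \<in> Ed N p}"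
      proof
        fix y assume "y \<in> sh N k ` {m. {n, m} \<in> Ed N p'}"
        then obtain m where m: "{n, m} \<in> Ed N p'" "y = sh N k m" by blast
        have "sh N k ` {n, m} \<in> Ed N p" using EE m(1) by blast
        then show "y \<in> {m. {x, m} \<in> Ed N p}" using m by (simp add: x_def)
      qed
    qed
    then show "{sc N p (sh N k n), pr N p (sh N k n)} = sh N k ` {sc N p' n, pr N p' n}"
      using nbr_set[OF N2 P x] nbr_set[OF N2 P' n] by (simp add: x_def)
  qed
qed

lemma comb_main:
  "(\<exists>k::int. \<forall>n<N. edge_col N p' n = edge_col N p (nat ((int n + k) mod int N))) \<longleftrightarrow>
   (\<exists>k. (\<lambda>e. sh N k ` e) ` Ed N p' = Ed N p)"
  unfolding sh_def[symmetric] using col_NB NB_Ed by simp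

end



lemma sh_fam_inv: assumes N0: "N > 0" and F: "\<And>e. e \<in> F \<Longrightarrow> e \<subseteq> {..<N}"
  shows "(\<lambda>e. sh N (- k) ` e) ` ((\<lambda>e. sh N k ` e) ` F) = F"
proof -
  have "\<And>e. e \<in> F \<Longrightarrow> sh N (- k) ` sh N k ` e = e"
  proof -
    fix e assume e: "e \<in> F"
    have "sh N (- k) ` sh N k ` e = (\<lambda>j. sh N (- k) (sh N k j)) ` e" by (simp add: image_image)
    also have "\<dots> = (\<lambda>j. j) ` e" using F[OF e] sh_inv[OF N0] by (intro image_cong) auto
    finally show "sh N (- k) ` sh N k ` e = e" by simp
  qed
  then show ?thesis by (simp add: image_image)
qed

lemma sh_PF: assumes N2: "N \<ge> 2" and P: "is_path N p"
  shows "(\<lambda>e. sh N r ` e) ` Ed N p \<subseteq> PF N"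
proof
  have N0: "N > 0" using N2 by simp
  fix f assume "f \<in> (\<lambda>e. sh N r ` e) ` Ed N p"
  then obtain e where e: "e \<in> Ed N p" "f = sh N r ` e" by blast
  from Ed_form[OF N2 P e(1)] obtain a b where "e = {a, b}" by blast
  then have "f = {sh N r a, sh N r b}" using e by simp
  then show "f \<in> PF N" using sh_lt[OF N0] unfolding PF_def by blast
qed

lemma Ed_PF: assumes N2: "N \<ge> 2" and P: "is_path N p"
  shows "Ed N p \<subseteq> PF N"
  using Ed_form[OF N2 P] unfolding PF_def by blast

lemma rot_shape: assumes N0: "N > 0"
  shows "(\<lambda>C. (\<lambda>z. cis (- 2 * pi * real_of_int r / real N) * z) ` C) ` shape N p
     = hullN N ` ((\<lambda>e. sh N r ` e) ` Ed N p)"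
  unfolding shape_eq image_image rot_hullN[OF N0] ..

lemma geo_main: assumes N2: "N \<ge> 2" and P: "is_path N p" and P': "is_path N p'"
  shows "shapes_equiv (shape N p) (shape N p') \<longleftrightarrow> (\<exists>r. (\<lambda>e. sh N r ` e) ` Ed N p = Ed N p')"
proof
  have N0: "N > 0" using N2 by simp
  assume "shapes_equiv (shape N p) (shape N p')"
  then obtain \<theta> where th: "(\<lambda>C. (\<lambda>z. cis \<theta> * z) ` C) ` shape N p = shape N p'"
    unfolding shapes_equiv_def by blast
  have "{p 0, p 1} \<in> Ed N p" by (rule p0_in[OF N2 P])
  then have "hullN N {p 0, p 1} \<in> shape N p" unfolding shape_eq by blast
  then have "(\<lambda>z. cis \<theta> * z) ` hullN N {p 0, p 1} \<in> shape N p'" using th by blast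
  then obtain e' where e': "e' \<in> Ed N p'" "(\<lambda>z. cis \<theta> * z) ` hullN N {p 0, p 1} = hullN N e'"
    unfolding shape_eq by blast
  from Ed_form[OF N2 P' e'(1)] obtain c d where cd: "e' = {c, d}" "c < N" "d < N" by blast
  have "convex hull {cis \<theta> * node N (p 0), cis \<theta> * node N (p 1)} = convex hull {node N c, node N d}"
    using e'(2) cd unfolding hullN_def rot_hull by simp
  then have "convex hull {cis \<theta> * node N (p 0), cis \<theta> * node N (p 1)} \<inter> sphere 0 1
      = convex hull {node N c, node N d} \<inter> sphere 0 1" by simp
  then have "{cis \<theta> * node N (p 0), cis \<theta> * node N (p 1)} = {node N c, node N d}"
    using hull_sphere[of "cis \<theta> * node N (p 0)" "cis \<theta> * node N (p 1)"] hull_sphere[OF norm_node norm_node, of N c N d]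
    by (simp add: norm_mult norm_node)
  then obtain m where m: "m < N" "cis \<theta> * node N (p 0) = node N m"
    using cd by (auto simp: doubleton_eq_iff)
  define r where "r = int m - int (p 0)"
  have "cis \<theta> = node N m / node N (p 0)" using m(2)
    by (metis node_def cis_neq_zero nonzero_mult_div_cancel_right)
  also have "\<dots> = cis (- 2 * pi * real m / real N - - 2 * pi * real (p 0) / real N)"
    unfolding node_def cis_divide ..
  also have "- 2 * pi * real m / real N - - 2 * pi * real (p 0) / real N = - 2 * pi * real_of_int r / real N"
    unfolding r_def using N0 by (simp add: field_simps)
  finally have cth: "cis \<theta> = cis (- 2 * pi * real_of_int r / real N)" .
  have "hullN N ` ((\<lambda>e. sh N r ` e) ` Ed N p) = hullN N ` Ed N p'"
    using th unfolding cth rot_shape[OF N0] unfolding shape_eq .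
  then have "(\<lambda>e. sh N r ` e) ` Ed N p = Ed N p'"
    by (rule inj_on_image_eq_iff[OF hullN_inj sh_PF[OF N2 P] Ed_PF[OF N2 P'], THEN iffD1])
  then show "\<exists>r. (\<lambda>e. sh N r ` e) ` Ed N p = Ed N p'" by blast
next
  have N0: "N > 0" using N2 by simp
  assume "\<exists>r. (\<lambda>e. sh N r ` e) ` Ed N p = Ed N p'"
  then obtain r where r: "(\<lambda>e. sh N r ` e) ` Ed N p = Ed N p'" by blast
  have "(\<lambda>C. (\<lambda>z. cis (- 2 * pi * real_of_int r / real N) * z) ` C) ` shape N p = shape N p'"
    unfolding rot_shape[OF N0] r unfolding shape_eq ..
  then show "shapes_equiv (shape N p) (shape N p')" unfolding shapes_equiv_def by blast
qed

theorem mainTheorem5: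
  fixes N :: nat and p p' :: "nat \<Rightarrow> nat"
  assumes "N \<ge> 2" and "is_path N p" and "is_path N p'"
  shows "shapes_equiv (shape N p) (shape N p') \<longleftrightarrow>
    (\<exists>k::int. \<forall>n<N. edge_col N p' n = edge_col N p (nat ((int n + k) mod int N)))"
proof -
  have N0: "N > 0" using assms by simp
  have sub: "\<And>e. e \<in> Ed N p \<Longrightarrow> e \<subseteq> {..<N}" "\<And>e. e \<in> Ed N p' \<Longrightarrow> e \<subseteq> {..<N}"
    using Ed_sub[OF assms(1,2)] Ed_sub[OF assms(1,3)] by auto
  have "(\<exists>r. (\<lambda>e. sh N r ` e) ` Ed N p = Ed N p') \<longleftrightarrow> (\<exists>k. (\<lambda>e. sh N k ` e) ` Ed N p' = Ed N p)"
  proof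
    assume "\<exists>r. (\<lambda>e. sh N r ` e) ` Ed N p = Ed N p'"
    then obtain r where r: "(\<lambda>e. sh N r ` e) ` Ed N p = Ed N p'" by blast
    have "(\<lambda>e. sh N (- r) ` e) ` Ed N p' = Ed N p"
      unfolding r[symmetric] by (rule sh_fam_inv[OF N0 sub(1)])
    then show "\<exists>k. (\<lambda>e. sh N k ` e) ` Ed N p' = Ed N p" by blast
  next
    assume "\<exists>k. (\<lambda>e. sh N k ` e) ` Ed N p' = Ed N p"
    then obtain k where k: "(\<lambda>e. sh N k ` e) ` Ed N p' = Ed N p" by blast
    have "(\<lambda>e. sh N (- k) ` e) ` Ed N p = Ed N p'"
      unfolding k[symmetric] by (rule sh_fam_inv[OF N0 sub(2)])
    then show "\<exists>r. (\<lambda>e. sh N r ` e) ` Ed N p = Ed N p'" by blast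
  qed
  then show ?thesis
    unfolding geo_main[OF assms] comb_main[OF assms] .
qed

end
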